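(* Let $F$ be a once-punctured torus equipped with a point of the decorated super Teichmüller space $S\tilde T(F)$. For an ideal triangulation of $F$ with arcs having super $\lambda$-lengths $a,b,c$, define the super semi-perimeter \[ h=\frac{a}{bc}+\frac{b}{ac}+\frac{c}{ab}+\frac{W_a}{a}+\frac{W_b}{b}+\frac{W_c}{c}. \] Then $h$ is invariant under flips, i.e. it takes the same value for every ideal triangulation of $F$.
   Context: $S\tilde T(F)$ is the decorated $\mathrm{OSp}(1|2)$ super Teichmüller space (Penner–Zeitlin), with values in a real Grassmann algebra. A point assigns, for each ideal triangulation of $F$ (three disjoint non-isotopic ideal arcs cutting $F$ into two ideal triangles), an even $\lambda$-length with positive body to each arc (depending only on the arc), an odd $\mu$-invariant to each triangle, and a spin structure orienting each arc. For an arc $e$, $W_e=\theta_1\theta_2$ where $\theta_1,\theta_2$ are the $\mu$-invariants of the triangles adjacent to $e$ lying counter-clockwise and clockwise of $e$ relative to its spin orientation; $W_e$ does not depend on the triangulation containing $e$. Flipping $c$ in a triangulation $\{a,b,c\}$ (with triangle $\mu$-invariants $\theta,\sigma$) yields the arc $d$ with $cd=a^2+b^2+abW_c$, new $\mu$-invariants $\theta'=(b\theta+a\sigma)/\sqrt{a^2+b^2}$, $\sigma'=(b\sigma-a\theta)/\sqrt{a^2+b^2}$, and the spin orientation on $b$ reversed. *)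

theory Defs
  imports Complex_Main
begin

text \<open>A real Grassmann algebra is modelled axiomatically: a real associative unital
algebra 'g with a Z/2-grading into an even part Ev and an odd part Od, which is
supercommutative, together with the body map to the reals (a unital algebra
homomorphism vanishing on odd elements) whose kernel consists of nilpotent
elements (the soul is nilpotent).\<close>

definition grassmann_alg :: "'g::real_algebra_1 set \<Rightarrow> 'g set \<Rightarrow> ('g \<Rightarrow> real) \<Rightarrow> bool" where
  "grassmann_alg Ev Od body \<longleftrightarrow>
     0 \<in> Ev \<and> 0 \<in> Od \<and> 1 \<in> Ev \<and>
     (\<forall>x\<in>Ev. \<forall>y\<in>Ev. x + y \<in> Ev) \<and> (\<forall>x\<in>Od. \<forall>y\<in>Od. x + y \<in> Od) \<and>
     (\<forall>r. \<forall>x\<in>Ev. scaleR r x \<in> Ev) \<and> (\<forall>r. \<forall>x\<in>Od. scaleR r x \<in> Od) \<and>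
     Ev \<inter> Od = {0} \<and> (\<forall>x. \<exists>e\<in>Ev. \<exists>d\<in>Od. x = e + d) \<and>
     (\<forall>x\<in>Ev. \<forall>y\<in>Ev. x * y \<in> Ev) \<and> (\<forall>x\<in>Ev. \<forall>y\<in>Od. x * y \<in> Od) \<and>
     (\<forall>x\<in>Od. \<forall>y\<in>Ev. x * y \<in> Od) \<and> (\<forall>x\<in>Od. \<forall>y\<in>Od. x * y \<in> Ev) \<and>
     (\<forall>x\<in>Ev. \<forall>y. x * y = y * x) \<and> (\<forall>x\<in>Od. \<forall>y\<in>Od. x * y = - (y * x)) \<and>
     (\<forall>x y. body (x + y) = body x + body y) \<and> (\<forall>r x. body (scaleR r x) = r * body x) \<and>
     (\<forall>x y. body (x * y) = body x * body y) \<and> body 1 = 1 \<and>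
     (\<forall>x\<in>Od. body x = 0) \<and>
     (\<forall>x. \<exists>n. (x - of_real (body x)) ^ n = 0)"

definition ginv :: "'g::ring_1 \<Rightarrow> 'g" where
  "ginv x = (THE y. x * y = 1 \<and> y * x = 1)"

text \<open>Isotopy classes of ideal arcs of the once-punctured torus F correspond to
primitive integer vectors (p,q) modulo sign (slopes in Q \<union> {\<infinity>}); ideal
triangulations correspond to triples of arcs with pairwise determinant \<plusminus>1
(Farey triangles). Flipping the arc w in (u,v,w) produces the unique other arc w'
(up to sign) such that (u,v,w') is a triangulation.\<close>

type_synonym slope = "int \<times> int"

definition neg :: "slope \<Rightarrow> slope" where
  "neg e = (- fst e, - snd e)"

definition det2 :: "slope \<Rightarrow> slope \<Rightarrow> int" where
  "det2 u v = fst u * snd v - snd u * fst v"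

definition is_triang :: "slope \<Rightarrow> slope \<Rightarrow> slope \<Rightarrow> bool" where
  "is_triang u v w \<longleftrightarrow> \<bar>det2 u v\<bar> = 1 \<and> \<bar>det2 v w\<bar> = 1 \<and> \<bar>det2 u w\<bar> = 1"

text \<open>lam e is the super lambda-length of the arc e, W e the even invariant
W_e = \<theta>1 \<theta>2 of the arc e (independent of the triangulation containing e).\<close>

definition super_teich_point ::
  "'g::real_algebra_1 set \<Rightarrow> 'g set \<Rightarrow> ('g \<Rightarrow> real) \<Rightarrow> (slope \<Rightarrow> 'g) \<Rightarrow> (slope \<Rightarrow> 'g) \<Rightarrow> bool" where
  "super_teich_point Ev Od body lam W \<longleftrightarrow>
     (\<forall>e. coprime (fst e) (snd e) \<longrightarrow>
          lam e \<in> Ev \<and> body (lam e) > 0 \<and> lam (neg e) = lam e \<and> W (neg e) = W e) \<and>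
     (\<forall>u v w. is_triang u v w \<longrightarrow>
          (\<exists>\<theta>\<in>Od. \<exists>\<sigma>\<in>Od. \<forall>e\<in>{u, v, w}. W e = \<theta> * \<sigma> \<or> W e = \<sigma> * \<theta>)) \<and>
     (\<forall>u v w w'. is_triang u v w \<and> is_triang u v w' \<and> w' \<noteq> w \<and> w' \<noteq> neg w \<longrightarrow>
          lam w * lam w' = lam u ^ 2 + lam v ^ 2 + lam u * lam v * W w)"

definition semi_perimeter :: "(slope \<Rightarrow> 'g::ring_1) \<Rightarrow> (slope \<Rightarrow> 'g) \<Rightarrow> slope \<Rightarrow> slope \<Rightarrow> slope \<Rightarrow> 'g" where
  "semi_perimeter lam W u v w =
     (let a = lam u; b = lam v; c = lam w in
        a * ginv (b * c) + b * ginv (a * c) + c * ginv (a * b)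
        + W u * ginv a + W v * ginv b + W w * ginv c)"

end

theory Submission
  imports Defs
begin

lemma ineq:
  fixes p q r t :: int
  assumes d: "\<bar>p*t - q*r\<bar> = 1" and le: "p^2+q^2 \<le> r^2+t^2"
    and nb: "\<not>(p^2+q^2 = 1 \<and> r^2+t^2 = 1)"
  shows "(r+p)^2+(t+q)^2 < r^2+t^2 \<or> (r-p)^2+(t-q)^2 < r^2+t^2"
proof (rule ccontr)
  define U where "U = p^2+q^2"
  define V where "V = r^2+t^2"
  define D where "D = p*r+q*t"
  assume "\<not> ?thesis"
  then have a1: "U + 2*D \<ge> 0" "U - 2*D \<ge> 0"
    unfolding U_def D_def by (auto simp: power2_eq_square algebra_simps)
  have sq1: "(p*t - q*r)^2 = 1" using d by (metis power2_abs one_power2)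
  have lag: "U*V = (p*t - q*r)^2 + D^2" unfolding U_def V_def D_def by (simp add: power2_eq_square algebra_simps)
  have U0: "U \<ge> 0" unfolding U_def by simp
  have "\<bar>2*D\<bar> \<le> U" using a1 by arith
  then have "\<bar>2*D\<bar>^2 \<le> U^2" by (rule power_mono) simp
  then have b1: "4*D^2 \<le> U^2" by (simp add: power2_eq_square)
  have "U^2 \<le> U*V" using U0 le unfolding U_def V_def by (simp add: power2_eq_square mult_left_mono)
  then have "4*D^2 \<le> 1 + D^2" using b1 lag sq1 by simp
  then have "3*D^2 \<le> 1" by simp
  then have "D^2 \<le> 0" by arith
  then have "D = 0" by simp
  then have "U*V = 1" using lag sq1 by simp
  then have "U = 1 \<and> V = 1" using U0 zmult_eq_1_iff by auto
  then show False using nb unfolding U_def V_def by simp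
qed

lemma unit_cases:
  fixes p q :: int
  assumes "p^2+q^2 = 1"
  shows "(p = 1 \<or> p = -1) \<and> q = 0 \<or> p = 0 \<and> (q = 1 \<or> q = -1)"
proof -
  have "p^2 \<le> 1" "q^2 \<le> 1" using assms by (smt (verit) zero_le_power2)+
  then have "\<bar>p\<bar> \<le> 1" "\<bar>q\<bar> \<le> 1" by (simp_all add: abs_square_le_1)
  then have "p \<in> {-1,0,1}" "q \<in> {-1,0,1}" by auto
  then show ?thesis using assms by auto
qed


definition central :: "'a::ring_1 \<Rightarrow> bool" where
  "central x \<longleftrightarrow> (\<forall>y. x * y = y * x)"

lemma cen_comm: "central x \<Longrightarrow> y * x = x * y"
  by (simp add: central_def)
lemma cen_lcomm: "central x \<Longrightarrow> y * (x * z) = x * (y * z)"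
  by (metis central_def mult.assoc)

lemma core:
  fixes a b c d ia ib ic id Wa Wb Wc :: "'a::ring_1"
  assumes cen: "central a" "central b" "central c" "central d" "central ia" "central ib"
    "central ic" "central id" "central Wc"
  and inv: "a*ia = 1" "b*ib = 1" "c*ic = 1" "d*id = 1"
  and rel: "c*d = a^2+b^2+a*b*Wc"
  shows "a*(ib*ic) + b*(ia*ic) + c*(ia*ib) + Wa*ia + Wb*ib + Wc*ic
       = a*(ib*id) + b*(ia*id) + d*(ia*ib) + Wa*ia + Wb*ib + Wc*id"
proof -
  have K: "ia*(ib*(a*a + b*b)) + Wc = ia*(ib*(c*d))"
  proof -
    have "ia*(ib*(c*d)) = ia*(ib*(a*a + b*b)) + ia*(ib*(a*(b*Wc)))"
      by (simp add: rel power2_eq_square mult.assoc distrib_left)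
    also have "ia*(ib*(a*(b*Wc))) = (ia*a)*((ib*b)*Wc)"
      using cen by (simp add: cen_lcomm cen_comm mult.assoc)
    also have "\<dots> = Wc" using inv cen by (simp add: cen_comm)
    finally show ?thesis by simp
  qed
  have L: "a*(ib*ic) + b*(ia*ic) + Wc*ic = ic*(ia*(ib*(a*a + b*b)) + Wc)"
  proof -
    have 1: "a*(ib*ic) = ic*(ia*(ib*(a*a)))"
    proof -
      have "ic*(ia*(ib*(a*a))) = (ia*a)*(ic*(ib*a))" using cen by (simp add: cen_lcomm cen_comm mult.assoc)
      also have "\<dots> = a*(ib*ic)" using inv cen by (simp add: cen_comm cen_lcomm)
      finally show ?thesis by simp
    qed
    have 2: "b*(ia*ic) = ic*(ia*(ib*(b*b)))"
    proof -
      have "ic*(ia*(ib*(b*b))) = (ib*b)*(ic*(ia*b))" using cen by (simp add: cen_lcomm cen_comm mult.assoc)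
      also have "\<dots> = b*(ia*ic)" using inv cen by (simp add: cen_comm cen_lcomm)
      finally show ?thesis by simp
    qed
    show ?thesis using 1 2 cen by (simp add: distrib_left cen_comm)
  qed
  have L2: "ic*(ia*(ib*(c*d))) = d*(ia*ib)"
  proof -
    have "ic*(ia*(ib*(c*d))) = (ic*c)*(d*(ia*ib))" using cen by (simp add: cen_lcomm cen_comm mult.assoc)
    also have "ic*c = 1" using inv cen by (simp add: cen_comm)
    finally show ?thesis by simp
  qed
  have LHS: "a*(ib*ic) + b*(ia*ic) + c*(ia*ib) + Wc*ic = d*(ia*ib) + c*(ia*ib)"
  proof -
    have "a*(ib*ic) + b*(ia*ic) + Wc*ic = d*(ia*ib)" using L K L2 by simp
    then show ?thesis by (simp add: algebra_simps)
  qed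
  have rel': "d*c = a^2+b^2+a*b*Wc" using rel cen by (simp add: cen_comm)
  have K': "ia*(ib*(a*a + b*b)) + Wc = ia*(ib*(d*c))"
  proof -
    have "ia*(ib*(d*c)) = ia*(ib*(a*a + b*b)) + ia*(ib*(a*(b*Wc)))"
      by (simp add: rel' power2_eq_square mult.assoc distrib_left)
    also have "ia*(ib*(a*(b*Wc))) = (ia*a)*((ib*b)*Wc)"
      using cen by (simp add: cen_lcomm cen_comm mult.assoc)
    also have "\<dots> = Wc" using inv cen by (simp add: cen_comm)
    finally show ?thesis by simp
  qed
  have M: "a*(ib*id) + b*(ia*id) + Wc*id = id*(ia*(ib*(a*a + b*b)) + Wc)"
  proof -
    have 1: "a*(ib*id) = id*(ia*(ib*(a*a)))"
    proof -
      have "id*(ia*(ib*(a*a))) = (ia*a)*(id*(ib*a))" using cen by (simp add: cen_lcomm cen_comm mult.assoc)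
      also have "\<dots> = a*(ib*id)" using inv cen by (simp add: cen_comm cen_lcomm)
      finally show ?thesis by simp
    qed
    have 2: "b*(ia*id) = id*(ia*(ib*(b*b)))"
    proof -
      have "id*(ia*(ib*(b*b))) = (ib*b)*(id*(ia*b))" using cen by (simp add: cen_lcomm cen_comm mult.assoc)
      also have "\<dots> = b*(ia*id)" using inv cen by (simp add: cen_comm cen_lcomm)
      finally show ?thesis by simp
    qed
    show ?thesis using 1 2 cen by (simp add: distrib_left cen_comm)
  qed
  have M2: "id*(ia*(ib*(d*c))) = c*(ia*ib)"
  proof -
    have "id*(ia*(ib*(d*c))) = (id*d)*(c*(ia*ib))" using cen by (simp add: cen_lcomm cen_comm mult.assoc)
    also have "id*d = 1" using inv cen by (simp add: cen_comm)
    finally show ?thesis by simp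
  qed
  have RHS: "a*(ib*id) + b*(ia*id) + d*(ia*ib) + Wc*id = c*(ia*ib) + d*(ia*ib)"
  proof -
    have "a*(ib*id) + b*(ia*id) + Wc*id = c*(ia*ib)" using M K' M2 by simp
    then show ?thesis by (simp add: algebra_simps)
  qed
  have "a*(ib*ic) + b*(ia*ic) + c*(ia*ib) + Wc*ic = a*(ib*id) + b*(ia*id) + d*(ia*ib) + Wc*id"
  proof -
    have e1: "a*(ib*ic) + b*(ia*ic) + Wc*ic = d*(ia*ib)" using L K L2 by simp
    have e2: "a*(ib*id) + b*(ia*id) + Wc*id = c*(ia*ib)" using M K' M2 by simp
    have "a*(ib*ic) + b*(ia*ic) + c*(ia*ib) + Wc*ic = (a*(ib*ic) + b*(ia*ic) + Wc*ic) + c*(ia*ib)"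
      by (simp only: ac_simps)
    also have "\<dots> = d*(ia*ib) + c*(ia*ib)" using e1 by simp
    also have "\<dots> = (a*(ib*id) + b*(ia*id) + Wc*id) + d*(ia*ib)" using e2 by (simp add: add.commute)
    also have "\<dots> = a*(ib*id) + b*(ia*id) + d*(ia*ib) + Wc*id" by (simp only: ac_simps)
    finally show ?thesis .
  qed
  then have "(a*(ib*ic) + b*(ia*ic) + c*(ia*ib) + Wc*ic) + (Wa*ia + Wb*ib) = (a*(ib*id) + b*(ia*id) + d*(ia*ib) + Wc*id) + (Wa*ia + Wb*ib)"
    by simp
  then show ?thesis by (simp only: ac_simps)
qed


lemma geom_r: "(1 - q) * (\<Sum>k<N. q^k) = (1::'a::ring_1) - q^N"
proof (induction N)
  case 0 then show ?case by simp
next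
  case (Suc N)
  have "(1 - q) * (\<Sum>k<Suc N. q^k) = (1 - q) * (\<Sum>k<N. q^k) + (1 - q) * q^N"
    by (simp add: distrib_left)
  also have "\<dots> = 1 - q^N + (q^N - q^Suc N)" using Suc by (simp add: left_diff_distrib)
  finally show ?case by simp
qed

lemma geom_l: "(\<Sum>k<N. q^k) * (1 - q) = (1::'a::ring_1) - q^N"
proof (induction N)
  case 0 then show ?case by simp
next
  case (Suc N)
  have "(\<Sum>k<Suc N. q^k) * (1 - q) = (\<Sum>k<N. q^k) * (1 - q) + q^N * (1 - q)"
    by (simp add: distrib_right)
  also have "\<dots> = 1 - q^N + (q^N - q^Suc N)" using Suc by (simp add: right_diff_distrib power_Suc2 power_commutes)
  finally show ?case by simp
qed

lemma scaleR_pow: "(scaleR r (y::'a::real_algebra_1)) ^ n = scaleR (r^n) (y^n)"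
  by (induction n) (simp_all add: mult_scaleR_left mult_scaleR_right)

lemma inv_exists:
  fixes x :: "'a::real_algebra_1"
  assumes r: "r > 0" and nil: "(x - scaleR r 1)^N = 0"
  shows "\<exists>y. x*y = 1 \<and> y*x = 1"
proof -
  define n where "n = x - scaleR r 1"
  define q where "q = scaleR (-1/r) n"
  define S where "S = (\<Sum>k<N. q^k)"
  have "q^N = scaleR ((-1/r)^N) (n^N)" unfolding q_def by (rule scaleR_pow)
  then have qN: "q^N = 0" using nil by (simp add: n_def)
  have x: "x = scaleR r (1 - q)"
    using r by (simp add: q_def n_def scaleR_diff_right)
  have "x * scaleR (1/r) S = 1"
    using r by (simp add: x mult_scaleR_left mult_scaleR_right S_def geom_r qN)
  moreover have "scaleR (1/r) S * x = 1"
    using r by (simp add: x mult_scaleR_left mult_scaleR_right S_def geom_l qN)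
  ultimately show ?thesis by blast
qed

lemma ginv_eq: "x*y = 1 \<Longrightarrow> y*x = 1 \<Longrightarrow> ginv x = (y::'a::ring_1)"
  unfolding ginv_def
proof (rule the_equality)
  fix z assume "x*y = 1" "y*x = 1" and z: "x*z = 1 \<and> z*x = 1"
  have "z = z*(x*y)" using \<open>x*y=1\<close> by simp
  also have "\<dots> = (z*x)*y" by (simp add: mult.assoc)
  finally show "z = y" using z by simp
qed simp

lemma central_inv: "central x \<Longrightarrow> x*y = 1 \<Longrightarrow> central y"
  unfolding central_def
proof (intro allI)
  fix z assume c: "\<forall>y. x * y = y * x" and xy: "x*y = 1"
  have yx: "y*x = 1" using c xy by metis
  have "y*z = y*z*(x*y)" using xy by simp
  also have "\<dots> = y*(z*x)*y" by (simp add: mult.assoc)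
  also have "\<dots> = y*(x*z)*y" using c by metis
  also have "\<dots> = z*y" using yx by (simp add: mult.assoc[symmetric])
  finally show "y*z = z*y" .
qed

lemma central_mult: "central x \<Longrightarrow> central y \<Longrightarrow> central (x*y)"
  unfolding central_def by (metis mult.assoc)

lemma coprime_det: "\<bar>(a::int) * d - b * c\<bar> = 1 \<Longrightarrow> coprime a b"
proof (rule coprimeI)
  fix k assume h: "\<bar>a * d - b * c\<bar> = 1" "k dvd a" "k dvd b"
  then have "k dvd a * d - b * c" by simp
  then have "k dvd \<bar>a * d - b * c\<bar>" by simp
  then show "is_unit k" using h(1) by simp
qed

definition padd :: "slope \<Rightarrow> slope \<Rightarrow> slope" where
  "padd u v = (fst u + fst v, snd u + snd v)"

definition sq :: "slope \<Rightarrow> int" where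
  "sq u = fst u ^ 2 + snd u ^ 2"

lemma det2_swap: "\<bar>det2 v u\<bar> = \<bar>det2 u v\<bar>"
  unfolding det2_def by (metis abs_minus_commute mult.commute)

lemma is_triang_sym12: "is_triang u v w \<Longrightarrow> is_triang v u w"
  and is_triang_sym23: "is_triang u v w \<Longrightarrow> is_triang u w v"
  unfolding is_triang_def by (auto simp: det2_swap)

lemma is_triang_coprime: "is_triang u v w \<Longrightarrow> coprime (fst u) (snd u)"
  unfolding is_triang_def det2_def by (auto intro: coprime_det)

lemma is_triang_coprime_all: "is_triang u v w \<Longrightarrow> coprime (fst u) (snd u) \<and> coprime (fst v) (snd v) \<and> coprime (fst w) (snd w)"
  by (meson is_triang_coprime is_triang_sym12 is_triang_sym23)

lemma triang_padd: "\<bar>det2 u v\<bar> = 1 \<Longrightarrow> is_triang u v (padd u v)"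
  unfolding is_triang_def det2_def padd_def by (auto simp: algebra_simps abs_minus_commute)

lemma neg_neg[simp]: "neg (neg e) = e" by (simp add: neg_def)


locale STP =
  fixes Ev Od :: "'g::real_algebra_1 set" and body :: "'g \<Rightarrow> real"
    and lam W :: "slope \<Rightarrow> 'g"
  assumes G: "grassmann_alg Ev Od body"
    and P: "super_teich_point Ev Od body lam W"
begin

abbreviation "hh \<equiv> semi_perimeter lam W"

lemma ev_central: "x \<in> Ev \<Longrightarrow> central x"
  using G unfolding grassmann_alg_def central_def by blast

lemma ev_inv: assumes "x \<in> Ev" "body x > 0"
  shows "x * ginv x = 1 \<and> ginv x * x = 1 \<and> central (ginv x)"
proof -
  have "\<forall>x. \<exists>n. (x - of_real (body x)) ^ n = 0" using G unfolding grassmann_alg_def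
    by (elim conjE) assumption
  then obtain N where "(x - of_real (body x))^N = 0" by blast
  then have "(x - scaleR (body x) 1)^N = 0" by (simp add: of_real_def)
  then obtain y where y: "x*y = 1" "y*x = 1" using inv_exists assms(2) by blast
  then have "ginv x = y" by (rule ginv_eq)
  then show ?thesis using y central_inv ev_central assms(1) by auto
qed

lemma lam_facts: "coprime (fst e) (snd e) \<Longrightarrow>
   lam e \<in> Ev \<and> body (lam e) > 0 \<and> lam (neg e) = lam e \<and> W (neg e) = W e"
  using P unfolding super_teich_point_def by blast

lemma W_ev: assumes "is_triang u v w" shows "W u \<in> Ev" "W v \<in> Ev" "W w \<in> Ev"
proof -
  obtain \<theta> \<sigma> where o: "\<theta> \<in> Od" "\<sigma> \<in> Od" and h: "\<forall>e\<in>{u, v, w}. W e = \<theta> * \<sigma> \<or> W e = \<sigma> * \<theta>"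
    using P assms unfolding super_teich_point_def by blast
  have "\<theta> * \<sigma> \<in> Ev" "\<sigma> * \<theta> \<in> Ev" using G o unfolding grassmann_alg_def by blast+
  then show "W u \<in> Ev" "W v \<in> Ev" "W w \<in> Ev" using h by auto
qed

lemma flip_rel: "is_triang u v w \<Longrightarrow> is_triang u v w' \<Longrightarrow> w' \<noteq> w \<Longrightarrow> w' \<noteq> neg w \<Longrightarrow>
   lam w * lam w' = lam u ^ 2 + lam v ^ 2 + lam u * lam v * W w"
  using P unfolding super_teich_point_def by blast

lemma hh_expand:
  assumes "is_triang u v w"
  defines "a \<equiv> lam u" and "b \<equiv> lam v" and "c \<equiv> lam w"
  shows "hh u v w = a*(ginv b*ginv c) + b*(ginv a*ginv c) + c*(ginv a*ginv b)
           + W u * ginv a + W v * ginv b + W w * ginv c"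
    and "central a" "central b" "central c" "central (ginv a)" "central (ginv b)" "central (ginv c)"
    and "a * ginv a = 1" "b * ginv b = 1" "c * ginv c = 1"
    and "central (W u)" "central (W v)" "central (W w)"
proof -
  have cp: "coprime (fst u) (snd u)" "coprime (fst v) (snd v)" "coprime (fst w) (snd w)"
    using is_triang_coprime_all[OF assms(1)] by auto
  have fa: "a \<in> Ev" "body a > 0" using lam_facts[OF cp(1)] a_def by auto
  have fb: "b \<in> Ev" "body b > 0" using lam_facts[OF cp(2)] b_def by auto
  have fc: "c \<in> Ev" "body c > 0" using lam_facts[OF cp(3)] c_def by auto
  note ia = ev_inv[OF fa] and ib = ev_inv[OF fb] and ic = ev_inv[OF fc]
  show ca: "central a" "central b" "central c" using fa fb fc ev_central by auto
  show "central (ginv a)" "central (ginv b)" "central (ginv c)" using ia ib ic by auto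
  show "a * ginv a = 1" "b * ginv b = 1" "c * ginv c = 1" using ia ib ic by auto
  show "central (W u)" "central (W v)" "central (W w)" using W_ev[OF assms(1)] ev_central by auto
  have gm: "ginv (x*y) = ginv x * ginv y" if "central x" "central y" "central (ginv x)"
     "x * ginv x = 1" "ginv x * x = 1" "y * ginv y = 1" "ginv y * y = 1" for x y
  proof (rule ginv_eq)
    have "y*(ginv x * ginv y) = ginv x * (y * ginv y)" using that cen_lcomm by blast
    then have "x*y*(ginv x * ginv y) = (x * ginv x) * (y * ginv y)"
      by (simp add: mult.assoc)
    then show "x*y*(ginv x * ginv y) = 1" using that by simp
    have "ginv x * ginv y * (x * y) = (ginv x * x) * (ginv y * y)"
      using that by (metis cen_lcomm mult.assoc)
    then show "ginv x * ginv y * (x * y) = 1" using that by simp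
  qed
  have g1: "ginv (b*c) = ginv b * ginv c" using gm ca ib ic by auto
  have g2: "ginv (a*c) = ginv a * ginv c" using gm ca ia ic by auto
  have g3: "ginv (a*b) = ginv a * ginv b" using gm ca ia ib by auto
  show "hh u v w = a*(ginv b*ginv c) + b*(ginv a*ginv c) + c*(ginv a*ginv b)
           + W u * ginv a + W v * ginv b + W w * ginv c"
    unfolding semi_perimeter_def Let_def a_def[symmetric] b_def[symmetric] c_def[symmetric]
    using g1 g2 g3 by simp
qed

lemma cancel_left: "central x \<Longrightarrow> x * ginv x = 1 \<Longrightarrow> ginv x * (x * z) = z"
  by (metis cen_comm mult.assoc mult_1_left)

lemma flip:
  assumes t1: "is_triang u v w" and t2: "is_triang u v w'" and n1: "w' \<noteq> w" and n2: "w' \<noteq> neg w"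
  shows "hh u v w = hh u v w'"
proof -
  note E = hh_expand[OF t1] and E' = hh_expand[OF t2]
  have r1: "lam w * lam w' = lam u ^ 2 + lam v ^ 2 + lam u * lam v * W w"
    using flip_rel[OF t1 t2 n1 n2] .
  have n3: "w \<noteq> neg w'" using n2 by auto
  have r2: "lam w' * lam w = lam u ^ 2 + lam v ^ 2 + lam u * lam v * W w'"
    using flip_rel[OF t2 t1 n1[symmetric] n3] .
  have "lam w * lam w' = lam w' * lam w" using E(4) cen_comm by metis
  then have "lam u * (lam v * W w) = lam u * (lam v * W w')" using r1 r2 by (simp add: mult.assoc)
  then have "ginv (lam v) * (ginv (lam u) * (lam u * (lam v * W w)))
           = ginv (lam v) * (ginv (lam u) * (lam u * (lam v * W w')))" by simp
  then have WW: "W w = W w'" using cancel_left E(2,3,8,9) by metis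
  have "hh u v w = hh u v w'"
    unfolding E(1) E'(1) WW[symmetric]
    apply (rule core)
    using E E' r1 WW by (simp_all add: mult.assoc)
  then show ?thesis .
qed

lemma hh_sym12: assumes t: "is_triang u v w" shows "hh u v w = hh v u w"
proof -
  note E = hh_expand[OF t] and E' = hh_expand[OF is_triang_sym12[OF t]]
  have "ginv (lam v) * ginv (lam u) = ginv (lam u) * ginv (lam v)" using E(5) cen_comm by metis
  then show ?thesis unfolding E(1) E'(1) by (simp add: ac_simps)
qed

lemma hh_sym23: assumes t: "is_triang u v w" shows "hh u v w = hh u w v"
proof -
  note E = hh_expand[OF t] and E' = hh_expand[OF is_triang_sym23[OF t]]
  have "ginv (lam w) * ginv (lam v) = ginv (lam v) * ginv (lam w)" using E(6) cen_comm by metis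
  then show ?thesis unfolding E(1) E'(1) by (simp add: ac_simps)
qed

lemma hh_neg1: "coprime (fst e) (snd e) \<Longrightarrow> hh (neg e) v w = hh e v w"
  unfolding semi_perimeter_def Let_def using lam_facts by simp
lemma hh_neg2: "coprime (fst e) (snd e) \<Longrightarrow> hh u (neg e) w = hh u e w"
  unfolding semi_perimeter_def Let_def using lam_facts by simp
lemma hh_neg3: "coprime (fst e) (snd e) \<Longrightarrow> hh u v (neg e) = hh u v e"
  unfolding semi_perimeter_def Let_def using lam_facts by simp

lemma hh_A: assumes t: "is_triang u v w" shows "hh u v w = hh u v (padd u v)"
proof -
  have t': "is_triang u v (padd u v)" using t triang_padd unfolding is_triang_def by blast
  show ?thesis
  proof (cases "w = padd u v \<or> w = neg (padd u v)")
    case True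
    have "coprime (fst (padd u v)) (snd (padd u v))" using is_triang_coprime_all[OF t'] by blast
    then show ?thesis using True hh_neg3[of "padd u v" u v] by auto
  next
    case False
    then have "padd u v \<noteq> w" "padd u v \<noteq> neg w" by auto
    then show ?thesis using flip[OF t t'] by blast
  qed
qed


lemma hh_sym13: assumes t: "is_triang u v w" shows "hh u v w = hh w v u"
proof -
  have t2: "is_triang v u w" using is_triang_sym12[OF t] .
  have t3: "is_triang v w u" using is_triang_sym23[OF t2] .
  show ?thesis using hh_sym12[OF t] hh_sym23[OF t2] hh_sym12[OF t3] by simp
qed

lemma is_triang_neg1: "is_triang (neg u) v w = is_triang u v w"
  and is_triang_neg2: "is_triang u (neg v) w = is_triang u v w"
  unfolding is_triang_def det2_def neg_def by (simp_all add: abs_minus_commute algebra_simps)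

lemma base:
  assumes u: "u = (1,0) \<or> u = (-1,0)" and v: "v = (0,1) \<or> v = (0,-1)" and t: "is_triang u v w"
  shows "hh u v w = hh (1,0) (0,1) (1,1)"
proof -
  have c1: "coprime (fst (1::int,0::int)) (snd (1::int,0::int))" by simp
  have c2: "coprime (fst (0::int,1::int)) (snd (0::int,1::int))" by simp
  have n1: "neg (1,0) = (-1,0)" "neg (0,1) = (0,-1)" by (simp_all add: neg_def)
  have e1: "hh u v w = hh (1,0) v w" using u hh_neg1[OF c1, of v w] n1 by auto
  have e2: "hh (1,0) v w = hh (1,0) (0,1) w" using v hh_neg2[OF c2, of "(1,0)" w] n1 by auto
  have t1: "is_triang (1,0) v w" using u t is_triang_neg1[of "(1,0)" v w] n1 by auto
  have t2: "is_triang (1,0) (0,1) w" using v t1 is_triang_neg2[of "(1,0)" "(0,1)" w] n1 by auto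
  have "hh (1,0) (0,1) w = hh (1,0) (0,1) (padd (1,0) (0,1))" using hh_A[OF t2] .
  then show ?thesis using e1 e2 by (simp add: padd_def)
qed

lemma tri_comb:
  assumes d: "\<bar>det2 u v\<bar> = 1" and s: "\<bar>s\<bar> = 1"
  shows "is_triang u v (fst v + s*fst u, snd v + s*snd u)"
    and "is_triang u v (fst u + s*fst v, snd u + s*snd v)"
proof -
  have "det2 u (fst v + s*fst u, snd v + s*snd u) = det2 u v"
       "det2 v (fst v + s*fst u, snd v + s*snd u) = - s * det2 u v"
    by (simp_all add: det2_def algebra_simps)
  then show "is_triang u v (fst v + s*fst u, snd v + s*snd u)"
    using d s unfolding is_triang_def by (simp add: abs_mult)
  have "det2 u (fst u + s*fst v, snd u + s*snd v) = s * det2 u v"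
       "det2 v (fst u + s*fst v, snd u + s*snd v) = - det2 u v"
    by (simp_all add: det2_def algebra_simps)
  then show "is_triang u v (fst u + s*fst v, snd u + s*snd v)"
    using d s unfolding is_triang_def by (simp add: abs_mult)
qed

lemma red: "\<bar>det2 u v\<bar> = 1 \<Longrightarrow> hh u v (padd u v) = hh (1,0) (0,1) (1,1)"
proof (induction "nat (sq u + sq v)" arbitrary: u v rule: less_induct)
  case less
  obtain p q where u: "u = (p,q)" by (cases u)
  obtain r t where v: "v = (r,t)" by (cases v)
  have d: "\<bar>p*t - q*r\<bar> = 1" using less.prems u v by (simp add: det2_def)
  have tp: "is_triang u v (padd u v)" using triang_padd[OF less.prems] .
  have sqn: "sq x \<ge> 0" for x unfolding sq_def by simp
  consider (b) "sq u = 1 \<and> sq v = 1" | (l) "sq u \<le> sq v" "\<not>(sq u = 1 \<and> sq v = 1)"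
    | (g) "sq v < sq u" by linarith
  then show ?case
  proof cases
    case b
    then have pu: "(p = 1 \<or> p = -1) \<and> q = 0 \<or> p = 0 \<and> (q = 1 \<or> q = -1)"
      and pv: "(r = 1 \<or> r = -1) \<and> t = 0 \<or> r = 0 \<and> (t = 1 \<or> t = -1)"
      using unit_cases u v unfolding sq_def by auto
    show ?thesis
    proof (cases "q = 0")
      case True
      then have "t \<noteq> 0" using d by auto
      then have "u = (1,0) \<or> u = (-1,0)" "v = (0,1) \<or> v = (0,-1)" using pu pv u v True by auto
      then show ?thesis using base tp by blast
    next
      case False
      then have "r \<noteq> 0" using d pu by auto
      then have "v = (1,0) \<or> v = (-1,0)" "u = (0,1) \<or> u = (0,-1)" using pu pv u v False by auto
      then show ?thesis using base is_triang_sym12[OF tp] hh_sym12[OF tp] by metis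
    qed
  next
    case l
    have "(r+p)^2+(t+q)^2 < r^2+t^2 \<or> (r-p)^2+(t-q)^2 < r^2+t^2"
      using ineq[OF d] l u v unfolding sq_def by simp
    then obtain s where s: "\<bar>s\<bar> = (1::int)" and sx: "(r+s*p)^2+(t+s*q)^2 < r^2+t^2"
      by (metis abs_minus_cancel abs_one diff_conv_add_uminus mult_1 mult_minus_left)
    define x where "x = (fst v + s*fst u, snd v + s*snd u)"
    have tx: "is_triang u v x" unfolding x_def using tri_comb(1)[OF less.prems s] .
    have sxx: "sq x < sq v" using sx u v unfolding x_def sq_def by simp
    have tx2: "is_triang u x v" using is_triang_sym23[OF tx] .
    have dx: "\<bar>det2 u x\<bar> = 1" using tx2 unfolding is_triang_def by blast
    have "hh u v (padd u v) = hh u v x" using hh_A[OF tx] by simp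
    also have "\<dots> = hh u x v" using hh_sym23[OF tx] .
    also have "\<dots> = hh u x (padd u x)" using hh_A[OF tx2] .
    also have "\<dots> = hh (1,0) (0,1) (1,1)"
      using less.hyps[OF _ dx] sxx sqn[of u] sqn[of x] by simp
    finally show ?thesis .
  next
    case g
    have d': "\<bar>r*q - t*p\<bar> = 1" using d by (simp add: abs_minus_commute mult.commute)
    have "(p+r)^2+(q+t)^2 < p^2+q^2 \<or> (p-r)^2+(q-t)^2 < p^2+q^2"
      using ineq[OF d'] g u v unfolding sq_def by simp
    then obtain s where s: "\<bar>s\<bar> = (1::int)" and sx: "(p+s*r)^2+(q+s*t)^2 < p^2+q^2"
      by (metis abs_minus_cancel abs_one diff_conv_add_uminus mult_1 mult_minus_left)
    define x where "x = (fst u + s*fst v, snd u + s*snd v)"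
    have tx: "is_triang u v x" unfolding x_def using tri_comb(2)[OF less.prems s] .
    have sxx: "sq x < sq u" using sx u v unfolding x_def sq_def by simp
    have tx2: "is_triang x v u" using is_triang_sym12[OF is_triang_sym23[OF is_triang_sym12[OF tx]]] .
    have dx: "\<bar>det2 x v\<bar> = 1" using tx2 unfolding is_triang_def by blast
    have "hh u v (padd u v) = hh u v x" using hh_A[OF tx] by simp
    also have "\<dots> = hh x v u" using hh_sym13[OF tx] .
    also have "\<dots> = hh x v (padd x v)" using hh_A[OF tx2] .
    also have "\<dots> = hh (1,0) (0,1) (1,1)"
      using less.hyps[OF _ dx] sxx sqn[of v] sqn[of x] by simp
    finally show ?thesis .
  qed
qed

end


theorem proposition4p2:
  fixes Ev Od :: "'g::real_algebra_1 set" and body :: "'g \<Rightarrow> real"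
    and lam W :: "slope \<Rightarrow> 'g"
  assumes "grassmann_alg Ev Od body"
    and "super_teich_point Ev Od body lam W"
    and "is_triang u v w" and "is_triang u' v' w'"
  shows "semi_perimeter lam W u v w = semi_perimeter lam W u' v' w'"
proof -
  interpret STP Ev Od body lam W using assms(1,2) by unfold_locales
  have d1: "\<bar>det2 u v\<bar> = 1" using assms(3) unfolding is_triang_def by blast
  have d2: "\<bar>det2 u' v'\<bar> = 1" using assms(4) unfolding is_triang_def by blast
  have "semi_perimeter lam W u v w = semi_perimeter lam W (1,0) (0,1) (1,1)"
    using hh_A[OF assms(3)] red[OF d1] by simp
  moreover have "semi_perimeter lam W u' v' w' = semi_perimeter lam W (1,0) (0,1) (1,1)"
    using hh_A[OF assms(4)] red[OF d2] by simp
  ultimately show ?thesis by simp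
qed

end
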